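(* Let $v_1,\dots,v_n\in\mathbb{H}^d$, not all zero, and write $V=[v_1,\dots,v_n]=V_1+V_2j$ with $V_1,V_2\in\mathbb{C}^{d\times n}$. Let $A=\frac1d\sum_j\|v_j\|^2$. The following are equivalent: (i) $V_{\mathbb{C}}=[[v_1]_{\mathbb{C}},\dots,[v_n]_{\mathbb{C}}]=\begin{pmatrix}V_1\\ \overline{V_2}\end{pmatrix}\in\mathbb{C}^{2d\times n}$ is a tight frame for $\mathbb{C}^{2d}$; (ii) $V_1V_1^*=V_2V_2^*=\frac12AI$ and $V_1V_2^T=V_2V_1^T=0$; (iii) $(V_1^*V_1+V_2^T\overline{V_2})^2=\frac12A\,(V_1^*V_1+V_2^T\overline{V_2})$; (iv) $\sum_j\sum_k|\operatorname{Co}_1(\langle v_j,v_k\rangle)|^2=\frac1{2d}\big(\sum_j\|v_j\|^2\big)^2$.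
   Context: Every quaternion (and entrywise every quaternionic vector or matrix) can be written uniquely as $z+wj$ with $z,w$ complex; note $jz=\bar zj$. The map $[\cdot]_{\mathbb{C}}:\mathbb{H}^d\to\mathbb{C}^{2d}$ is $z+wj\mapsto\begin{pmatrix}z\\ \bar w\end{pmatrix}$ ($z,w\in\mathbb{C}^d$), which is $\mathbb{C}$-linear for right scalar multiplication. For $q=z+wj\in\mathbb{H}$ define $\operatorname{Co}_1(q)=z$ and $\operatorname{Co}_2(q)=\bar w$. Inner products are Euclidean, $\langle v,w\rangle=\sum_j\overline{w_j}v_j$, on $\mathbb{H}^d$ and $\mathbb{C}^{2d}$. A sequence $(u_j)$ is a tight frame for $\mathbb{F}^D$ if $\sum_ju_ju_j^*=cI$ for some $c>0$. $A^T$ is the transpose, $A^*$ the conjugate transpose, $\overline{A}$ the entrywise conjugate. *)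

theory Defs
  imports "Jordan_Normal_Form.Schur_Decomposition"
begin

(* A quaternion q = z + w j, stored by its complex components (z, w). *)
datatype quat = Quat (qz: complex) (qw: complex)

(* Multiplication, derived from j z = cnj z j and j^2 = -1:
   (a + b j)(c + e j) = (a c - b cnj e) + (a e + b cnj c) j *)
definition qmult :: "quat \<Rightarrow> quat \<Rightarrow> quat" where
  "qmult p q = Quat (qz p * qz q - qw p * cnj (qw q)) (qz p * qw q + qw p * cnj (qz q))"

definition qadd :: "quat \<Rightarrow> quat \<Rightarrow> quat" where
  "qadd p q = Quat (qz p + qz q) (qw p + qw q)"

definition qconj :: "quat \<Rightarrow> quat" where
  "qconj q = Quat (cnj (qz q)) (- qw q)"

definition Co1 :: "quat \<Rightarrow> complex" where "Co1 q = qz q"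
definition Co2 :: "quat \<Rightarrow> complex" where "Co2 q = cnj (qw q)"

definition qnorm2 :: "quat \<Rightarrow> real" where
  "qnorm2 q = (cmod (qz q))\<^sup>2 + (cmod (qw q))\<^sup>2"

(* vectors in H^d : functions nat => quat, entries 0..<d *)
definition qinner :: "nat \<Rightarrow> (nat \<Rightarrow> quat) \<Rightarrow> (nat \<Rightarrow> quat) \<Rightarrow> quat" where
  "qinner d v w = foldr (\<lambda>l acc. qadd (qmult (qconj (w l)) (v l)) acc) [0..<d] (Quat 0 0)"

definition qvnorm2 :: "nat \<Rightarrow> (nat \<Rightarrow> quat) \<Rightarrow> real" where
  "qvnorm2 d v = (\<Sum>l<d. qnorm2 (v l))"

definition qcol :: "complex mat \<Rightarrow> complex mat \<Rightarrow> nat \<Rightarrow> (nat \<Rightarrow> quat)" where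
  "qcol V1 V2 j = (\<lambda>l. Quat (V1 $$ (l, j)) (V2 $$ (l, j)))"

definition frame_op :: "nat \<Rightarrow> complex vec list \<Rightarrow> complex mat" where
  "frame_op D us = mat D D (\<lambda>(a, b). \<Sum>j<length us. (us ! j) $ a * cnj ((us ! j) $ b))"

definition tight_frame :: "nat \<Rightarrow> complex vec list \<Rightarrow> bool" where
  "tight_frame D us \<longleftrightarrow> (\<forall>u\<in>set us. u \<in> carrier_vec D) \<and>
     (\<exists>c::real. c > 0 \<and> frame_op D us = complex_of_real c \<cdot>\<^sub>m 1\<^sub>m D)"

end

theory Submission
  imports Defs
begin
definition Sf :: "(nat \<Rightarrow> nat \<Rightarrow> complex) \<Rightarrow> nat \<Rightarrow> nat \<Rightarrow> nat \<Rightarrow> complex" where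
  "Sf w n a b = (\<Sum>j<n. w a j * cnj (w b j))"
definition Gf :: "(nat \<Rightarrow> nat \<Rightarrow> complex) \<Rightarrow> nat \<Rightarrow> nat \<Rightarrow> nat \<Rightarrow> complex" where
  "Gf w D k j = (\<Sum>a<D. cnj (w a k) * w a j)"

lemma FS: "(\<Sum>a<D. \<Sum>b<D. (cmod (Sf w n a b))\<^sup>2) = (\<Sum>k<n. \<Sum>j<n. (cmod (Gf w D k j))\<^sup>2)"
proof -
  have "complex_of_real (\<Sum>a<D. \<Sum>b<D. (cmod (Sf w n a b))\<^sup>2)
     = (\<Sum>a<D. \<Sum>b<D. \<Sum>j<n. \<Sum>k<n. w a j * cnj (w b j) * (cnj (w a k) * w b k))"
    unfolding of_real_sum complex_norm_square Sf_def by (simp add: sum_product cnj_sum mult_ac)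
  also have "\<dots> = (\<Sum>a<D. \<Sum>j<n. \<Sum>b<D. \<Sum>k<n. w a j * cnj (w b j) * (cnj (w a k) * w b k))"
    by (intro sum.cong refl sum.swap)
  also have "\<dots> = (\<Sum>j<n. \<Sum>a<D. \<Sum>b<D. \<Sum>k<n. w a j * cnj (w b j) * (cnj (w a k) * w b k))"
    by (rule sum.swap)
  also have "\<dots> = (\<Sum>j<n. \<Sum>a<D. \<Sum>k<n. \<Sum>b<D. w a j * cnj (w b j) * (cnj (w a k) * w b k))"
    by (intro sum.cong refl sum.swap)
  also have "\<dots> = (\<Sum>j<n. \<Sum>k<n. \<Sum>a<D. \<Sum>b<D. w a j * cnj (w b j) * (cnj (w a k) * w b k))"
    by (intro sum.cong refl sum.swap)
  also have "\<dots> = (\<Sum>k<n. \<Sum>j<n. \<Sum>a<D. \<Sum>b<D. w a j * cnj (w b j) * (cnj (w a k) * w b k))"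
    by (rule sum.swap)
  also have "\<dots> = (\<Sum>k<n. \<Sum>j<n. \<Sum>b<D. \<Sum>a<D. w a j * cnj (w b j) * (cnj (w a k) * w b k))"
    by (intro sum.cong refl sum.swap)
  also have "\<dots> = complex_of_real (\<Sum>k<n. \<Sum>j<n. (cmod (Gf w D k j))\<^sup>2)"
    unfolding of_real_sum complex_norm_square Gf_def by (simp add: sum_product cnj_sum mult_ac)
  finally show ?thesis using of_real_eq_iff by blast
qed

lemma Saa: "Sf w n a a = complex_of_real (\<Sum>j<n. (cmod (w a j))\<^sup>2)"
  unfolding Sf_def of_real_sum complex_norm_square by (rule refl)
lemma Gkk: "Gf w D k k = complex_of_real (\<Sum>a<D. (cmod (w a k))\<^sup>2)"
  unfolding Gf_def of_real_sum complex_norm_square by (simp add: mult.commute)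

lemma cmod_minus_real: "(cmod (z - complex_of_real x))\<^sup>2 = (cmod z)\<^sup>2 - 2 * x * Re z + x\<^sup>2"
  unfolding cmod_power2 by (simp add: power2_eq_square algebra_simps)

lemma Sherm: "Sf w n b a = cnj (Sf w n a b)"
  by (simp add: Sf_def cnj_sum mult.commute)
lemma Gherm: "Gf w D j k = cnj (Gf w D k j)"
  by (simp add: Gf_def cnj_sum mult.commute)

lemma key:
  assumes D: "D > 0" and T: "T = (\<Sum>a<D. \<Sum>j<n. (cmod (w a j))\<^sup>2)" and m: "m = T / real D"
  shows "(\<Sum>a<D. \<Sum>b<D. (cmod (Sf w n a b - (if a = b then complex_of_real m else 0)))\<^sup>2)
       = (\<Sum>a<D. \<Sum>b<D. (cmod (Sf w n a b))\<^sup>2) - T\<^sup>2 / real D"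
proof -
  have "(\<Sum>a<D. \<Sum>b<D. (cmod (Sf w n a b - (if a = b then complex_of_real m else 0)))\<^sup>2)
     = (\<Sum>a<D. (\<Sum>b<D. (cmod (Sf w n a b))\<^sup>2) - 2 * m * Re (Sf w n a a) + m\<^sup>2)"
  proof (rule sum.cong[OF refl])
    fix a assume a: "a \<in> {..<D}"
    have "(\<Sum>b<D. (cmod (Sf w n a b - (if a = b then complex_of_real m else 0)))\<^sup>2)
       = (\<Sum>b<D. (cmod (Sf w n a b))\<^sup>2 - (if a = b then 2 * m * Re (Sf w n a b) - m\<^sup>2 else 0))"
      by (intro sum.cong refl) (simp add: cmod_minus_real)
    also have "\<dots> = (\<Sum>b<D. (cmod (Sf w n a b))\<^sup>2) - (2 * m * Re (Sf w n a a) - m\<^sup>2)"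
      using a by (simp add: sum_subtractf)
    finally show "(\<Sum>b<D. (cmod (Sf w n a b - (if a = b then complex_of_real m else 0)))\<^sup>2)
       = (\<Sum>b<D. (cmod (Sf w n a b))\<^sup>2) - 2 * m * Re (Sf w n a a) + m\<^sup>2" by simp
  qed
  also have "\<dots> = (\<Sum>a<D. \<Sum>b<D. (cmod (Sf w n a b))\<^sup>2) - 2 * m * T + real D * m\<^sup>2"
    by (simp add: sum.distrib sum_subtractf Saa T sum_distrib_left)
  also have "\<dots> = (\<Sum>a<D. \<Sum>b<D. (cmod (Sf w n a b))\<^sup>2) - T\<^sup>2 / real D"
    using D by (simp add: m field_simps power2_eq_square)
  finally show ?thesis .
qed

lemma key2:
  assumes D: "D > 0" and T: "T = (\<Sum>a<D. \<Sum>j<n. (cmod (w a j))\<^sup>2)" and m: "m = T / real D"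
  shows "(\<Sum>a<D. \<Sum>b<D. (cmod (Sf w n a b))\<^sup>2) = T\<^sup>2 / real D
     \<longleftrightarrow> (\<forall>a<D. \<forall>b<D. Sf w n a b = (if a = b then complex_of_real m else 0))"
proof -
  have "(\<Sum>a<D. \<Sum>b<D. (cmod (Sf w n a b))\<^sup>2) = T\<^sup>2 / real D \<longleftrightarrow>
     (\<Sum>a<D. \<Sum>b<D. (cmod (Sf w n a b - (if a = b then complex_of_real m else 0)))\<^sup>2) = 0"
    using key[OF assms] by simp
  also have "\<dots> \<longleftrightarrow> (\<forall>a<D. \<forall>b<D. (cmod (Sf w n a b - (if a = b then complex_of_real m else 0)))\<^sup>2 = 0)"
    by (simp add: sum_nonneg_eq_0_iff sum_nonneg) auto
  also have "\<dots> \<longleftrightarrow> (\<forall>a<D. \<forall>b<D. Sf w n a b = (if a = b then complex_of_real m else 0))"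
    by (auto simp del: of_real_eq_iff)
  finally show ?thesis .
qed

lemma GG:
  assumes "\<forall>a<D. \<forall>b<D. Sf w n a b = (if a = b then complex_of_real m else 0)" and k: "k < n" and j: "j < n"
  shows "(\<Sum>i<n. Gf w D k i * Gf w D i j) = complex_of_real m * Gf w D k j"
proof -
  have "(\<Sum>i<n. Gf w D k i * Gf w D i j) = (\<Sum>i<n. \<Sum>a<D. \<Sum>b<D. cnj (w a k) * (w a i * cnj (w b i)) * w b j)"
    by (simp add: Gf_def sum_product mult_ac)
  also have "\<dots> = (\<Sum>a<D. \<Sum>i<n. \<Sum>b<D. cnj (w a k) * (w a i * cnj (w b i)) * w b j)"
    by (rule sum.swap)
  also have "\<dots> = (\<Sum>a<D. \<Sum>b<D. \<Sum>i<n. cnj (w a k) * (w a i * cnj (w b i)) * w b j)"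
    by (intro sum.cong refl sum.swap)
  also have "\<dots> = (\<Sum>a<D. \<Sum>b<D. cnj (w a k) * Sf w n a b * w b j)"
    by (simp add: Sf_def sum_distrib_left sum_distrib_right)
  also have "\<dots> = (\<Sum>a<D. \<Sum>b<D. if a = b then complex_of_real m * (cnj (w a k) * w a j) else 0)"
    using assms(1) by (intro sum.cong refl) auto
  also have "\<dots> = complex_of_real m * Gf w D k j"
    by (simp add: Gf_def sum_distrib_left)
  finally show ?thesis .
qed

lemma trGG: "(\<Sum>k<n. \<Sum>i<n. Gf w D k i * Gf w D i k) = complex_of_real (\<Sum>k<n. \<Sum>j<n. (cmod (Gf w D k j))\<^sup>2)"
  unfolding of_real_sum complex_norm_square by (intro sum.cong refl) (metis Gherm)


lemma sum_split2: "(\<Sum>a<2*d. f a) = (\<Sum>a<d. f a) + (\<Sum>a<d. f (a + d)) " for f :: "nat \<Rightarrow> 'b::comm_monoid_add"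
proof -
  have "(\<Sum>a<2*d. f a) = sum f {0..<d} + sum f {d..<d+d}"
    using sum.atLeastLessThan_concat[of 0 d "d+d" f] by (simp add: lessThan_atLeast0 mult_2)
  also have "sum f {d..<d+d} = sum f {0+d..<d+d}" by simp
  also have "\<dots> = (\<Sum>a\<in>{0..<d}. f (a + d))" by (rule sum.shift_bounds_nat_ivl)
  finally show ?thesis by (simp add: lessThan_atLeast0)
qed

lemma quad: "(\<forall>a<2*(d::nat). \<forall>b<2*d. Q a b) \<longleftrightarrow>
  (\<forall>a<d. \<forall>b<d. Q a b \<and> Q (a+d) (b+d) \<and> Q a (b+d) \<and> Q (a+d) b)"
proof
  assume "\<forall>a<2*d. \<forall>b<2*d. Q a b" then show "\<forall>a<d. \<forall>b<d. Q a b \<and> Q (a+d) (b+d) \<and> Q a (b+d) \<and> Q (a+d) b"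
    by auto
next
  assume H: "\<forall>a<d. \<forall>b<d. Q a b \<and> Q (a+d) (b+d) \<and> Q a (b+d) \<and> Q (a+d) b"
  show "\<forall>a<2*d. \<forall>b<2*d. Q a b"
  proof (intro allI impI)
    fix a b assume a: "a < 2*d" and b: "b < 2*d"
    have ha: "a < d \<or> (a - d < d \<and> a = (a - d) + d)" using a by auto
    have hb: "b < d \<or> (b - d < d \<and> b = (b - d) + d)" using b by auto
    from ha hb H show "Q a b" by metis
  qed
qed

lemma adj_index: "A \<in> carrier_mat nr nc \<Longrightarrow> i < nc \<Longrightarrow> j < nr \<Longrightarrow> mat_adjoint A $$ (i,j) = cnj (A $$ (j,i))"
  unfolding mat_adjoint_def by (simp add: mat_of_rows_index)
lemma adj_carrier: "A \<in> carrier_mat nr nc \<Longrightarrow> mat_adjoint A \<in> carrier_mat nc nr"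
  unfolding mat_adjoint_def by auto

lemma mult_index: "A \<in> carrier_mat nr m \<Longrightarrow> B \<in> carrier_mat m nc \<Longrightarrow> i < nr \<Longrightarrow> j < nc \<Longrightarrow>
   (A * B) $$ (i,j) = (\<Sum>k<m. A $$ (i,k) * B $$ (k,j))"
  by (auto simp: scalar_prod_def lessThan_atLeast0 intro!: sum.cong)

lemma mat_eq_idx: "M1 \<in> carrier_mat r c \<Longrightarrow> M2 \<in> carrier_mat r c \<Longrightarrow>
   M1 = M2 \<longleftrightarrow> (\<forall>i<r. \<forall>j<c. M1 $$ (i,j) = M2 $$ (i,j))"
  by auto

lemma qz_foldr: "qz (foldr (\<lambda>l acc. qadd (f l) acc) xs q) = sum_list (map (\<lambda>l. qz (f l)) xs) + qz q"
  by (induction xs) (auto simp: qadd_def)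

lemma Co1_qinner: "Co1 (qinner d v u) = (\<Sum>l<d. qz (qmult (qconj (u l)) (v l)))"
  unfolding Co1_def qinner_def qz_foldr
  by (simp add: sum_set_upt_conv_sum_list_nat[symmetric] lessThan_atLeast0)

lemma cnj_eq_iff: "cnj z = w \<longleftrightarrow> z = cnj w" by auto


theorem lemma9:
  fixes V1 V2 :: "complex mat" and d n :: nat and A :: real
  assumes V1: "V1 \<in> carrier_mat d n" and V2: "V2 \<in> carrier_mat d n"
    and nonzero: "\<exists>j<n. \<exists>l<d. qcol V1 V2 j l \<noteq> Quat 0 0"
    and A_def: "A = (1 / real d) * (\<Sum>j<n. qvnorm2 d (qcol V1 V2 j))"
  shows
    "(tight_frame (2 * d) (cols (V1 @\<^sub>r map_mat cnj V2))
      \<longleftrightarrow> (V1 * mat_adjoint V1 = complex_of_real (A / 2) \<cdot>\<^sub>m 1\<^sub>m d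
           \<and> V2 * mat_adjoint V2 = complex_of_real (A / 2) \<cdot>\<^sub>m 1\<^sub>m d
           \<and> V1 * transpose_mat V2 = 0\<^sub>m d d
           \<and> V2 * transpose_mat V1 = 0\<^sub>m d d))
   \<and> (tight_frame (2 * d) (cols (V1 @\<^sub>r map_mat cnj V2))
      \<longleftrightarrow> (let G = mat_adjoint V1 * V1 + transpose_mat V2 * map_mat cnj V2
           in G * G = complex_of_real (A / 2) \<cdot>\<^sub>m G))
   \<and> (tight_frame (2 * d) (cols (V1 @\<^sub>r map_mat cnj V2))
      \<longleftrightarrow> (\<Sum>j<n. \<Sum>k<n. (cmod (Co1 (qinner d (qcol V1 V2 j) (qcol V1 V2 k))))\<^sup>2)
           = (1 / (2 * real d)) * (\<Sum>j<n. qvnorm2 d (qcol V1 V2 j))\<^sup>2)"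
proof -
  define W where "W = V1 @\<^sub>r map_mat cnj V2"
  have Wc: "W \<in> carrier_mat (2*d) n" unfolding W_def mult_2 using V1 V2 by auto
  define w where "w = (\<lambda>a j. W $$ (a, j))"
  have w1: "w a j = V1 $$ (a, j)" if "a < d" "j < n" for a j
    using that V1 V2 unfolding w_def W_def append_rows_def by auto
  have w2: "w (a + d) j = cnj (V2 $$ (a, j))" if "a < d" "j < n" for a j
    using that V1 V2 unfolding w_def W_def append_rows_def by auto
  define T where "T = (\<Sum>a<2*d. \<Sum>j<n. (cmod (w a j))\<^sup>2)"
  define m where "m = T / real (2*d)"
  define P where "P = (\<forall>a<2*d. \<forall>b<2*d. Sf w n a b = (if a = b then complex_of_real m else 0))"
  define FS where "FS = (\<Sum>a<2*d. \<Sum>b<2*d. (cmod (Sf w n a b))\<^sup>2)"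
  define FG where "FG = (\<Sum>k<n. \<Sum>j<n. (cmod (Gf w (2*d) k j))\<^sup>2)"
  have FSG: "FS = FG" unfolding FS_def FG_def by (rule FS)
  have qv: "qvnorm2 d (qcol V1 V2 j) = (\<Sum>l<d. (cmod (V1 $$ (l,j)))\<^sup>2 + (cmod (V2 $$ (l,j)))\<^sup>2)" for j
    unfolding qvnorm2_def qcol_def qnorm2_def by simp
  have Tq: "T = (\<Sum>j<n. qvnorm2 d (qcol V1 V2 j))"
  proof -
    have "T = (\<Sum>a<d. \<Sum>j<n. (cmod (w a j))\<^sup>2) + (\<Sum>a<d. \<Sum>j<n. (cmod (w (a+d) j))\<^sup>2)"
      unfolding T_def by (rule sum_split2)
    also have "\<dots> = (\<Sum>a<d. \<Sum>j<n. (cmod (V1 $$ (a,j)))\<^sup>2) + (\<Sum>a<d. \<Sum>j<n. (cmod (V2 $$ (a,j)))\<^sup>2)"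
      by (simp add: w1 w2)
    also have "\<dots> = (\<Sum>j<n. \<Sum>a<d. (cmod (V1 $$ (a,j)))\<^sup>2) + (\<Sum>j<n. \<Sum>a<d. (cmod (V2 $$ (a,j)))\<^sup>2)"
      by (simp add: sum.swap[of _ "{..<d}"])
    also have "\<dots> = (\<Sum>j<n. qvnorm2 d (qcol V1 V2 j))"
      by (simp add: qv sum.distrib)
    finally show ?thesis .
  qed
  obtain j0 l0 where j0: "j0 < n" and l0: "l0 < d" and nz: "qcol V1 V2 j0 l0 \<noteq> Quat 0 0"
    using nonzero by auto
  have dpos: "d > 0" using l0 by auto
  have Tpos: "T > 0"
  proof -
    have pos: "qnorm2 (qcol V1 V2 j0 l0) > 0"
      using nz unfolding qnorm2_def qcol_def
      by (auto simp: add_pos_nonneg add_nonneg_pos)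
    have "qnorm2 (qcol V1 V2 j0 l0) \<le> qvnorm2 d (qcol V1 V2 j0)"
      unfolding qvnorm2_def using l0
      by (intro member_le_sum) (auto simp: qnorm2_def)
    also have "\<dots> \<le> (\<Sum>j<n. qvnorm2 d (qcol V1 V2 j))"
      using j0 by (intro member_le_sum) (auto simp: qvnorm2_def qnorm2_def intro!: add_nonneg_nonneg sum_nonneg)
    finally show ?thesis using pos Tq by linarith
  qed
  have mpos: "m > 0" unfolding m_def using Tpos dpos by auto
  have Am: "A / 2 = m" unfolding A_def m_def Tq[symmetric] by simp
  have key2': "FS = T\<^sup>2 / real (2*d) \<longleftrightarrow> P"
    unfolding FS_def P_def by (rule key2) (use dpos T_def m_def in auto)
  have TS: "T = (\<Sum>a<2*d. Re (Sf w n a a))" unfolding T_def by (simp add: Saa)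
  have TG: "T = (\<Sum>k<n. Re (Gf w (2*d) k k))" unfolding T_def Gkk by (simp add: sum.swap[of _ "{..<n}"])

  have FO: "frame_op (2*d) (cols W) = mat (2*d) (2*d) (\<lambda>(a,b). Sf w n a b)"
    unfolding frame_op_def using Wc
    by (intro cong_mat) (auto simp: Sf_def w_def intro!: sum.cong)
  have i_iff: "tight_frame (2*d) (cols W) \<longleftrightarrow> P"
  proof
    assume "tight_frame (2*d) (cols W)"
    then obtain c :: real where c: "c > 0" and fc: "frame_op (2*d) (cols W) = complex_of_real c \<cdot>\<^sub>m 1\<^sub>m (2*d)"
      unfolding tight_frame_def by auto
    have Sc: "Sf w n a b = (if a = b then complex_of_real c else 0)" if "a < 2*d" "b < 2*d" for a b
    proof -
      have "Sf w n a b = frame_op (2*d) (cols W) $$ (a,b)" using that FO by simp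
      also have "\<dots> = (if a = b then complex_of_real c else 0)" using that fc by simp
      finally show ?thesis .
    qed
    have "T = (\<Sum>a<2*d. c)" unfolding TS by (intro sum.cong refl) (simp add: Sc)
    then have "c = m" unfolding m_def using dpos by simp
    then show P unfolding P_def using Sc by simp
  next
    assume P
    have "frame_op (2*d) (cols W) = complex_of_real m \<cdot>\<^sub>m 1\<^sub>m (2*d)"
      unfolding FO using \<open>P\<close> unfolding P_def by (intro eq_matI) auto
    moreover have "\<forall>u\<in>set (cols W). u \<in> carrier_vec (2*d)"
      using Wc by (auto simp: cols_def)
    ultimately show "tight_frame (2*d) (cols W)" unfolding tight_frame_def using mpos by blast
  qed

  have E1: "(V1 * mat_adjoint V1) $$ (a,b) = Sf w n a b" if "a < d" "b < d" for a b
    using that V1 by (simp add: mult_index[OF V1 adj_carrier[OF V1]] adj_index[OF V1] Sf_def w1)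
  have E2: "(V2 * mat_adjoint V2) $$ (a,b) = cnj (Sf w n (a+d) (b+d))" if "a < d" "b < d" for a b
    using that V2 by (simp add: mult_index[OF V2 adj_carrier[OF V2]] adj_index[OF V2] Sf_def w2 cnj_sum mult.commute)
  have E3: "(V1 * transpose_mat V2) $$ (a,b) = Sf w n a (b+d)" if "a < d" "b < d" for a b
    using that V1 V2 by (simp add: mult_index[OF V1, of "transpose_mat V2" d] Sf_def w1 w2 del: index_mult_mat)
  have E4: "(V2 * transpose_mat V1) $$ (a,b) = cnj (Sf w n (a+d) b)" if "a < d" "b < d" for a b
    using that V1 V2 by (simp add: mult_index[OF V2, of "transpose_mat V1" d] Sf_def w1 w2 cnj_sum mult.commute del: index_mult_mat)
  have ii_iff: "(V1 * mat_adjoint V1 = complex_of_real (A / 2) \<cdot>\<^sub>m 1\<^sub>m d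
           \<and> V2 * mat_adjoint V2 = complex_of_real (A / 2) \<cdot>\<^sub>m 1\<^sub>m d
           \<and> V1 * transpose_mat V2 = 0\<^sub>m d d
           \<and> V2 * transpose_mat V1 = 0\<^sub>m d d) \<longleftrightarrow> P"
  proof -
    have c1: "V1 * mat_adjoint V1 \<in> carrier_mat d d" using V1 adj_carrier[OF V1] by auto
    have c2: "V2 * mat_adjoint V2 \<in> carrier_mat d d" using V2 adj_carrier[OF V2] by auto
    have c3: "V1 * transpose_mat V2 \<in> carrier_mat d d" using V1 V2 by auto
    have c4: "V2 * transpose_mat V1 \<in> carrier_mat d d" using V1 V2 by auto
    have s: "complex_of_real m \<cdot>\<^sub>m 1\<^sub>m d \<in> carrier_mat d d" by auto
    have z: "0\<^sub>m d d \<in> carrier_mat d d" by auto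
    have "P \<longleftrightarrow> (\<forall>a<d. \<forall>b<d. Sf w n a b = (if a = b then complex_of_real m else 0)
        \<and> Sf w n (a+d) (b+d) = (if a = b then complex_of_real m else 0)
        \<and> Sf w n a (b+d) = 0 \<and> Sf w n (a+d) b = 0)"
      unfolding P_def quad by auto
    also have "\<dots> \<longleftrightarrow> (\<forall>a<d. \<forall>b<d. (V1 * mat_adjoint V1) $$ (a,b) = (complex_of_real m \<cdot>\<^sub>m 1\<^sub>m d) $$ (a,b)
        \<and> (V2 * mat_adjoint V2) $$ (a,b) = (complex_of_real m \<cdot>\<^sub>m 1\<^sub>m d) $$ (a,b)
        \<and> (V1 * transpose_mat V2) $$ (a,b) = 0\<^sub>m d d $$ (a,b) \<and> (V2 * transpose_mat V1) $$ (a,b) = 0\<^sub>m d d $$ (a,b))"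
      by (auto simp: E1 E2 E3 E4 cnj_eq_iff)
    also have "\<dots> \<longleftrightarrow> (V1 * mat_adjoint V1 = complex_of_real (A / 2) \<cdot>\<^sub>m 1\<^sub>m d
           \<and> V2 * mat_adjoint V2 = complex_of_real (A / 2) \<cdot>\<^sub>m 1\<^sub>m d
           \<and> V1 * transpose_mat V2 = 0\<^sub>m d d
           \<and> V2 * transpose_mat V1 = 0\<^sub>m d d)"
      unfolding Am mat_eq_idx[OF c1 s] mat_eq_idx[OF c2 s] mat_eq_idx[OF c3 z] mat_eq_idx[OF c4 z]
      by blast
    finally show ?thesis by simp
  qed

  define Gm where "Gm = mat_adjoint V1 * V1 + transpose_mat V2 * map_mat cnj V2"
  have Gc: "Gm \<in> carrier_mat n n" unfolding Gm_def using V1 V2 adj_carrier[OF V1] by auto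
  have GE: "Gm $$ (k,j) = Gf w (2*d) k j" if "k < n" "j < n" for k j
  proof -
    have "Gm $$ (k,j) = (mat_adjoint V1 * V1) $$ (k,j) + (transpose_mat V2 * map_mat cnj V2) $$ (k,j)"
      unfolding Gm_def using that V1 V2 by simp
    also have "\<dots> = (\<Sum>a<d. cnj (V1 $$ (a,k)) * V1 $$ (a,j)) + (\<Sum>a<d. V2 $$ (a,k) * cnj (V2 $$ (a,j)))"
      using that V1 V2
      by (simp add: mult_index[OF adj_carrier[OF V1] V1] adj_index[OF V1]
                    mult_index[of "transpose_mat V2" n d "map_mat cnj V2" n] del: index_mult_mat)
    also have "\<dots> = Gf w (2*d) k j"
      unfolding Gf_def sum_split2 using that by (simp add: w1 w2)
    finally show ?thesis .
  qed
  have GGE: "(Gm * Gm) $$ (k,j) = (\<Sum>i<n. Gf w (2*d) k i * Gf w (2*d) i j)" if "k < n" "j < n" for k j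
    using that by (simp add: mult_index[OF Gc Gc] GE)
  have iii_iff: "(Gm * Gm = complex_of_real (A / 2) \<cdot>\<^sub>m Gm) \<longleftrightarrow> P"
  proof -
    have c1: "Gm * Gm \<in> carrier_mat n n" using Gc by auto
    have c2: "complex_of_real (A / 2) \<cdot>\<^sub>m Gm \<in> carrier_mat n n" using Gc by auto
    have "(Gm * Gm = complex_of_real (A / 2) \<cdot>\<^sub>m Gm) \<longleftrightarrow>
        (\<forall>k<n. \<forall>j<n. (Gm * Gm) $$ (k,j) = (complex_of_real (A / 2) \<cdot>\<^sub>m Gm) $$ (k,j))"
      by (rule mat_eq_idx[OF c1 c2])
    also have "\<dots> \<longleftrightarrow>
        (\<forall>k<n. \<forall>j<n. (\<Sum>i<n. Gf w (2*d) k i * Gf w (2*d) i j) = complex_of_real m * Gf w (2*d) k j)"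
      using Gc by (simp add: GGE GE Am del: index_mult_mat)
    also have "\<dots> \<longleftrightarrow> P"
    proof
      assume H: "\<forall>k<n. \<forall>j<n. (\<Sum>i<n. Gf w (2*d) k i * Gf w (2*d) i j) = complex_of_real m * Gf w (2*d) k j"
      have "complex_of_real FG = (\<Sum>k<n. \<Sum>i<n. Gf w (2*d) k i * Gf w (2*d) i k)"
        unfolding FG_def by (rule trGG[symmetric])
      also have "\<dots> = (\<Sum>k<n. complex_of_real m * Gf w (2*d) k k)" using H by simp
      also have "\<dots> = complex_of_real (m * T)"
        unfolding TG by (simp add: Gkk sum_distrib_left)
      finally have "FG = m * T" using of_real_eq_iff by blast
      then have "FS = T\<^sup>2 / real (2*d)" unfolding FSG m_def by (simp add: power2_eq_square)
      then show P using key2' by simp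
    next
      assume P
      then show "\<forall>k<n. \<forall>j<n. (\<Sum>i<n. Gf w (2*d) k i * Gf w (2*d) i j) = complex_of_real m * Gf w (2*d) k j"
        unfolding P_def by (auto intro: GG)
    qed
    finally show ?thesis .
  qed

  have CoG: "Co1 (qinner d (qcol V1 V2 j) (qcol V1 V2 k)) = Gf w (2*d) k j" if "k < n" "j < n" for j k
    unfolding Co1_qinner Gf_def sum_split2 using that
    by (simp add: w1 w2 qcol_def qconj_def qmult_def sum.distrib)
  have iv_iff: "((\<Sum>j<n. \<Sum>k<n. (cmod (Co1 (qinner d (qcol V1 V2 j) (qcol V1 V2 k))))\<^sup>2)
           = (1 / (2 * real d)) * (\<Sum>j<n. qvnorm2 d (qcol V1 V2 j))\<^sup>2) \<longleftrightarrow> P"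
  proof -
    have "(\<Sum>j<n. \<Sum>k<n. (cmod (Co1 (qinner d (qcol V1 V2 j) (qcol V1 V2 k))))\<^sup>2)
        = (\<Sum>j<n. \<Sum>k<n. (cmod (Gf w (2*d) k j))\<^sup>2)" by (simp add: CoG)
    also have "\<dots> = FG" unfolding FG_def by (rule sum.swap)
    finally have "(\<Sum>j<n. \<Sum>k<n. (cmod (Co1 (qinner d (qcol V1 V2 j) (qcol V1 V2 k))))\<^sup>2) = FS"
      using FSG by simp
    moreover have "(1 / (2 * real d)) * (\<Sum>j<n. qvnorm2 d (qcol V1 V2 j))\<^sup>2 = T\<^sup>2 / real (2*d)"
      by (simp add: Tq[symmetric])
    ultimately show ?thesis using key2' by metis
  qed
  show ?thesis
    using i_iff ii_iff iii_iff iv_iff unfolding W_def Gm_def Let_def by blast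
qed

end
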